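(* Let $T$ be a tree of order at least $6$ in which the set $S'(T)$ of weak support vertices is a maximum $2$-packing. Then $d_T(x,S'(T)\setminus\{x\})=3$ for every $x\in S'(T)$.
   Context: A weak support vertex is a vertex adjacent to exactly one leaf. A $2$-packing is a set of vertices pairwise at distance at least $3$; a maximum $2$-packing is one of maximum cardinality. $d_T(x,Y)=\min_{y\in Y}d_T(x,y)$. *)

theory Defs
  imports Main
begin

definition graph :: "'a set \<Rightarrow> ('a \<Rightarrow> 'a \<Rightarrow> bool) \<Rightarrow> bool" where
  "graph V E \<longleftrightarrow> finite V \<and> (\<forall>x y. E x y \<longrightarrow> x \<in> V \<and> y \<in> V \<and> x \<noteq> y \<and> E y x)"

definition edges :: "'a set \<Rightarrow> ('a \<Rightarrow> 'a \<Rightarrow> bool) \<Rightarrow> 'a set set" where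
  "edges V E = {{x, y} | x y. x \<in> V \<and> y \<in> V \<and> E x y}"

definition walk :: "'a set \<Rightarrow> ('a \<Rightarrow> 'a \<Rightarrow> bool) \<Rightarrow> 'a list \<Rightarrow> bool" where
  "walk V E xs \<longleftrightarrow> xs \<noteq> [] \<and> set xs \<subseteq> V \<and> (\<forall>i. Suc i < length xs \<longrightarrow> E (xs ! i) (xs ! Suc i))"

definition connected_graph :: "'a set \<Rightarrow> ('a \<Rightarrow> 'a \<Rightarrow> bool) \<Rightarrow> bool" where
  "connected_graph V E \<longleftrightarrow>
     (\<forall>x\<in>V. \<forall>y\<in>V. \<exists>xs. walk V E xs \<and> hd xs = x \<and> last xs = y)"

definition tree :: "'a set \<Rightarrow> ('a \<Rightarrow> 'a \<Rightarrow> bool) \<Rightarrow> bool" where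
  "tree V E \<longleftrightarrow> graph V E \<and> V \<noteq> {} \<and> connected_graph V E \<and> card (edges V E) = card V - 1"

definition dist :: "'a set \<Rightarrow> ('a \<Rightarrow> 'a \<Rightarrow> bool) \<Rightarrow> 'a \<Rightarrow> 'a \<Rightarrow> nat" where
  "dist V E x y = (LEAST n. \<exists>xs. walk V E xs \<and> hd xs = x \<and> last xs = y \<and> length xs = Suc n)"

definition dist_set :: "'a set \<Rightarrow> ('a \<Rightarrow> 'a \<Rightarrow> bool) \<Rightarrow> 'a \<Rightarrow> 'a set \<Rightarrow> nat" where
  "dist_set V E x Y = Min (dist V E x ` Y)"

definition leaf :: "'a set \<Rightarrow> ('a \<Rightarrow> 'a \<Rightarrow> bool) \<Rightarrow> 'a \<Rightarrow> bool" where
  "leaf V E v \<longleftrightarrow> v \<in> V \<and> card {u \<in> V. E v u} = 1"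

definition weak_support :: "'a set \<Rightarrow> ('a \<Rightarrow> 'a \<Rightarrow> bool) \<Rightarrow> 'a \<Rightarrow> bool" where
  "weak_support V E v \<longleftrightarrow> v \<in> V \<and> card {u \<in> V. E v u \<and> leaf V E u} = 1"

definition weak_supports :: "'a set \<Rightarrow> ('a \<Rightarrow> 'a \<Rightarrow> bool) \<Rightarrow> 'a set" where
  "weak_supports V E = {v \<in> V. weak_support V E v}"

definition two_packing :: "'a set \<Rightarrow> ('a \<Rightarrow> 'a \<Rightarrow> bool) \<Rightarrow> 'a set \<Rightarrow> bool" where
  "two_packing V E P \<longleftrightarrow> P \<subseteq> V \<and> (\<forall>x\<in>P. \<forall>y\<in>P. x \<noteq> y \<longrightarrow> dist V E x y \<ge> 3)"

definition max_two_packing :: "'a set \<Rightarrow> ('a \<Rightarrow> 'a \<Rightarrow> bool) \<Rightarrow> 'a set \<Rightarrow> bool" where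
  "max_two_packing V E P \<longleftrightarrow> two_packing V E P \<and>
     (\<forall>Q. two_packing V E Q \<longrightarrow> card Q \<le> card P)"

end

theory Submission
  imports Defs
begin

locale tg =
  fixes V :: "'a set" and E :: "'a \<Rightarrow> 'a \<Rightarrow> bool"
  assumes g: "graph V E" and c: "connected_graph V E"
begin

lemma Esym: "E x y \<Longrightarrow> E y x" using g unfolding graph_def by blast
lemma EV: "E x y \<Longrightarrow> x \<in> V \<and> y \<in> V \<and> x \<noteq> y" using g unfolding graph_def by blast

lemma walk_single[simp]: "walk V E [x] \<longleftrightarrow> x \<in> V"
  by (simp add: walk_def)

lemma walk_Cons2[simp]: "walk V E (a # b # xs) \<longleftrightarrow> a \<in> V \<and> E a b \<and> walk V E (b # xs)"
proof
  assume w: "walk V E (a # b # xs)"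
  have "E a b" using w unfolding walk_def by (metis One_nat_def length_Cons nth_Cons_0 nth_Cons_Suc zero_less_Suc Suc_less_eq)
  moreover have "walk V E (b # xs)" unfolding walk_def
  proof (intro conjI allI impI)
    fix i assume "Suc i < length (b # xs)"
    then have "Suc (Suc i) < length (a # b # xs)" by simp
    then show "E ((b # xs) ! i) ((b # xs) ! Suc i)" using w unfolding walk_def by fastforce
  qed (use w in \<open>auto simp: walk_def\<close>)
  ultimately show "a \<in> V \<and> E a b \<and> walk V E (b # xs)" using w by (simp add: walk_def)
next
  assume h: "a \<in> V \<and> E a b \<and> walk V E (b # xs)"
  show "walk V E (a # b # xs)" unfolding walk_def
  proof (intro conjI allI impI)
    fix i assume i: "Suc i < length (a # b # xs)"
    show "E ((a # b # xs) ! i) ((a # b # xs) ! Suc i)"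
    proof (cases i)
      case 0 then show ?thesis using h by simp
    next
      case (Suc j)
      then have "Suc j < length (b # xs)" using i by simp
      then show ?thesis using h Suc unfolding walk_def by auto
    qed
  qed (use h in \<open>auto simp: walk_def\<close>)
qed

lemma walk_append:
  "walk V E xs \<Longrightarrow> walk V E ys \<Longrightarrow> last xs = hd ys \<Longrightarrow> walk V E (xs @ tl ys)"
proof (induction xs rule: induct_list012)
  case 1 then show ?case by (simp add: walk_def)
next
  case (2 x) then show ?case by (cases ys) auto
next
  case (3 x y zs) then show ?case by auto
qed

lemma walk_nonempty: "walk V E xs \<Longrightarrow> xs \<noteq> []" by (simp add: walk_def)

lemma walk_rev: "walk V E xs \<Longrightarrow> walk V E (rev xs)"
proof (induction xs rule: induct_list012)
  case 1 then show ?case by simp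
next
  case (2 x) then show ?case by simp
next
  case (3 x y zs)
  then have w: "walk V E (rev (y # zs))" and e: "E x y" and xv: "x \<in> V" by auto
  have "walk V E [y, x]" using e Esym EV by auto
  from walk_append[OF w this] show ?case by simp
qed

lemma dist_witness:
  assumes "x \<in> V" "y \<in> V"
  shows "\<exists>xs. walk V E xs \<and> hd xs = x \<and> last xs = y \<and> length xs = Suc (dist V E x y)"
proof -
  obtain xs where xs: "walk V E xs" "hd xs = x" "last xs = y"
    using c assms unfolding connected_graph_def by blast
  then have "length xs = Suc (length xs - 1)" using walk_nonempty by (cases xs) auto
  then have "\<exists>n xs. walk V E xs \<and> hd xs = x \<and> last xs = y \<and> length xs = Suc n" using xs by blast
  then show ?thesis unfolding dist_def by (rule LeastI_ex)
qed

lemma dist_le: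
  assumes "walk V E xs" "hd xs = x" "last xs = y"
  shows "dist V E x y \<le> length xs - 1"
proof -
  have "length xs = Suc (length xs - 1)" using walk_nonempty assms by (cases xs) auto
  then show ?thesis unfolding dist_def using assms by (intro Least_le) blast
qed

lemma dist_sym: "x \<in> V \<Longrightarrow> y \<in> V \<Longrightarrow> dist V E x y = dist V E y x"
proof -
  have le: "dist V E a b \<le> dist V E b a" if ab: "a \<in> V" "b \<in> V" for a b
  proof -
    obtain xs where xs: "walk V E xs" "hd xs = b" "last xs = a" "length xs = Suc (dist V E b a)"
      using dist_witness ab by blast
    have "hd (rev xs) = a" "last (rev xs) = b" using xs walk_nonempty
      by (auto simp: hd_rev last_rev)
    from dist_le[OF walk_rev[OF xs(1)] this] xs(4) show ?thesis by simp
  qed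
  assume "x \<in> V" "y \<in> V" then show ?thesis using le by (simp add: le_antisym)
qed

lemma dist_tri: "x \<in> V \<Longrightarrow> y \<in> V \<Longrightarrow> z \<in> V \<Longrightarrow> dist V E x z \<le> dist V E x y + dist V E y z"
proof -
  assume v: "x \<in> V" "y \<in> V" "z \<in> V"
  obtain xs where xs: "walk V E xs" "hd xs = x" "last xs = y" "length xs = Suc (dist V E x y)"
    using dist_witness v by blast
  obtain ys where ys: "walk V E ys" "hd ys = y" "last ys = z" "length ys = Suc (dist V E y z)"
    using dist_witness v by blast
  have w: "walk V E (xs @ tl ys)" using walk_append xs ys by simp
  have "hd (xs @ tl ys) = x" using xs walk_nonempty by (cases xs) auto
  moreover have "last (xs @ tl ys) = z" using xs ys walk_nonempty
    by (cases ys) (auto simp: last_append)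
  ultimately have "dist V E x z \<le> length (xs @ tl ys) - 1" using dist_le w by blast
  then show ?thesis using xs ys by simp
qed

lemma dist_self: "x \<in> V \<Longrightarrow> dist V E x x = 0"
  using dist_le[of "[x]" x x] by simp

lemma dist_0: "x \<in> V \<Longrightarrow> y \<in> V \<Longrightarrow> dist V E x y = 0 \<Longrightarrow> x = y"
proof -
  assume v: "x \<in> V" "y \<in> V" "dist V E x y = 0"
  obtain xs where xs: "walk V E xs" "hd xs = x" "last xs = y" "length xs = Suc (dist V E x y)"
    using dist_witness v by blast
  then obtain a where "xs = [a]" using v by (cases xs) auto
  then show ?thesis using xs by simp
qed

lemma dist_E: "E x y \<Longrightarrow> dist V E x y = 1"
proof -
  assume e: "E x y"
  then have "walk V E [x, y]" using EV by auto
  then have "dist V E x y \<le> 1" using dist_le[of "[x,y]" x y] by simp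
  moreover have "dist V E x y \<noteq> 0" using dist_0 EV e by blast
  ultimately show ?thesis by simp
qed

lemma dist_1: "x \<in> V \<Longrightarrow> y \<in> V \<Longrightarrow> dist V E x y \<le> 1 \<Longrightarrow> x = y \<or> E x y"
proof -
  assume v: "x \<in> V" "y \<in> V" "dist V E x y \<le> 1"
  obtain xs where xs: "walk V E xs" "hd xs = x" "last xs = y" "length xs = Suc (dist V E x y)"
    using dist_witness v by blast
  show ?thesis
  proof (cases "dist V E x y = 0")
    case True then show ?thesis using dist_0 v by blast
  next
    case False
    then have "length xs = 2" using xs v by simp
    then obtain a b where "xs = [a, b]"
      by (metis (no_types, lifting) One_nat_def Suc_1 length_0_conv length_Suc_conv)
    then show ?thesis using xs by simp
  qed
qed

lemma dist_leaf:
  assumes l: "leaf V E l" and e: "E l s" and v: "v \<in> V" "v \<noteq> l"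
  shows "Suc (dist V E s v) \<le> dist V E l v"
proof -
  have lv: "l \<in> V" using l by (simp add: leaf_def)
  obtain xs where xs: "walk V E xs" "hd xs = l" "last xs = v" "length xs = Suc (dist V E l v)"
    using dist_witness v lv by blast
  obtain a b rest where xr: "xs = a # b # rest"
    using xs v by (cases xs; cases "tl xs") auto
  have ab: "a = l" "E l b" "walk V E (b # rest)" using xs xr by auto
  have "card {u \<in> V. E l u} = 1" using l by (simp add: leaf_def)
  moreover have "b \<in> {u \<in> V. E l u}" "s \<in> {u \<in> V. E l u}" using ab e EV by auto
  ultimately have "b = s" by (metis card_1_singletonE singletonD)
  have "last (b # rest) = v" using xs xr by simp
  then have "dist V E b v \<le> length (b # rest) - 1"
    using dist_le[OF ab(3)] by simp
  then have "dist V E s v \<le> length rest" using \<open>b = s\<close> by simp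
  then show ?thesis using xs xr by simp
qed

lemma dist2_exists:
  assumes x: "x \<in> V" and v: "v \<in> V" and d: "dist V E x v \<ge> 2"
  shows "\<exists>w\<in>V. dist V E x w = 2"
proof -
  obtain xs where xs: "walk V E xs" "hd xs = x" "last xs = v" "length xs = Suc (dist V E x v)"
    using dist_witness x v by blast
  obtain a b c' rest where xr: "xs = a # b # c' # rest"
    using xs d by (cases xs; cases "tl xs"; cases "tl (tl xs)") auto
  have w1: "walk V E [a, b, c']" and w2: "walk V E (c' # rest)" and cv: "c' \<in> V"
    using xs xr EV by auto
  have "hd [a,b,c'] = x" "last [a,b,c'] = c'" "last (c' # rest) = v" using xs xr by auto
  then have "dist V E x c' \<le> 2" "dist V E c' v \<le> length rest"
    using dist_le[OF w1] dist_le[OF w2] by fastforce+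
  moreover have "dist V E x v \<le> dist V E x c' + dist V E c' v" using dist_tri x v cv by blast
  ultimately have "dist V E x c' = 2" using xs xr by simp
  then show ?thesis using cv by blast
qed


lemma edges_finite: "finite (edges V E)"
proof -
  have "edges V E \<subseteq> Pow V" unfolding edges_def by auto
  moreover have "finite V" using g by (simp add: graph_def)
  ultimately show ?thesis by (meson finite_Pow_iff finite_subset)
qed

lemma exists_dist2:
  assumes t: "card (edges V E) = card V - 1" and n: "card V \<ge> 6"
    and ws: "weak_support V E x"
  shows "\<exists>w\<in>V. dist V E x w = 2"
proof (rule ccontr)
  assume na: "\<not> ?thesis"
  have xV: "x \<in> V" using ws by (simp add: weak_support_def)
  have finV: "finite V" using g by (simp add: graph_def)
  have near: "v = x \<or> E x v" if "v \<in> V" for v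
  proof -
    have "dist V E x v \<le> 1"
    proof (rule ccontr)
      assume "\<not> dist V E x v \<le> 1"
      then have "dist V E x v \<ge> 2" by simp
      then show False using dist2_exists xV that na by blast
    qed
    then show ?thesis using dist_1 xV that by blast
  qed
  define N where "N = {u \<in> V. E x u}"
  have finN: "finite N" using finV N_def by simp
  have "V \<subseteq> insert x N" using near N_def by auto
  then have "card V \<le> card (insert x N)" using finN by (intro card_mono) auto
  also have "\<dots> \<le> Suc (card N)" by (simp add: card_insert_le_m1 finN)
  finally have cVN: "card V \<le> Suc (card N)" .
  have "card {u \<in> V. E x u \<and> leaf V E u} = 1" using ws by (simp add: weak_support_def)
  then obtain l where L: "{u \<in> V. E x u \<and> leaf V E u} = {l}" by (meson card_1_singletonE)
  have "card (N - {l}) \<ge> 4" proof -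
    have "card N \<ge> 5" using cVN n by linarith
    then show ?thesis using finN by (cases "l \<in> N") (simp_all add: card_Diff_singleton_if)
  qed
  then have "N - {l} \<noteq> {}" by (metis card.empty not_numeral_le_zero)
  then obtain u where u: "u \<in> N" "u \<noteq> l" by blast
  have uV: "u \<in> V" and xu: "E x u" using u N_def by auto
  have "\<not> leaf V E u" using L u uV xu by blast
  then have c1: "card {v \<in> V. E u v} \<noteq> 1" using uV by (simp add: leaf_def)
  have xin: "x \<in> {v \<in> V. E u v}" using xu Esym xV by auto
  obtain w where w: "w \<in> V" "E u w" "w \<noteq> x"
  proof -
    have "\<not> {v \<in> V. E u v} \<subseteq> {x}"
    proof
      assume "{v \<in> V. E u v} \<subseteq> {x}"
      then have "{v \<in> V. E u v} = {x}" using xin by blast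
      then show False using c1 by simp
    qed
    then show ?thesis using that by blast
  qed
  have wN: "w \<in> N" using near[OF w(1)] w N_def by auto
  have img: "(\<lambda>v. {x, v}) ` N \<subseteq> edges V E" unfolding edges_def N_def using xV by auto
  have uw: "{u, w} \<in> edges V E" unfolding edges_def using uV w by auto
  have xu': "x \<noteq> u" using xu EV by blast
  have notin: "{u, w} \<notin> (\<lambda>v. {x, v}) ` N" using xu' w(3) by auto
  have inj: "inj_on (\<lambda>v. {x, v}) N"
  proof (rule inj_onI)
    fix a b assume "a \<in> N" "b \<in> N" "{x, a} = {x, b}"
    moreover have "a \<noteq> x" "b \<noteq> x" using \<open>a \<in> N\<close> \<open>b \<in> N\<close> N_def EV by auto
    ultimately show "a = b" by (metis doubleton_eq_iff)
  qed
  have "insert {u, w} ((\<lambda>v. {x, v}) ` N) \<subseteq> edges V E" using img uw by auto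
  then have "card (insert {u, w} ((\<lambda>v. {x, v}) ` N)) \<le> card (edges V E)"
    using edges_finite by (rule card_mono[rotated])
  moreover have "card (insert {u, w} ((\<lambda>v. {x, v}) ` N)) = Suc (card N)"
    using notin inj finN by (simp add: card_image)
  ultimately show False using t cVN n by simp
qed

end

theorem claim2:
  fixes V :: "'a set" and E :: "'a \<Rightarrow> 'a \<Rightarrow> bool"
  assumes "tree V E"
    and "card V \<ge> 6"
    and "max_two_packing V E (weak_supports V E)"
  shows "\<forall>x \<in> weak_supports V E. dist_set V E x (weak_supports V E - {x}) = 3"
proof
  fix x assume xS0: "x \<in> weak_supports V E"
  interpret tg V E using assms(1) by unfold_locales (simp_all add: tree_def)
  have tE: "card (edges V E) = card V - 1" using assms(1) by (simp add: tree_def)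
  define S where "S = weak_supports V E"
  have xS: "x \<in> S" using xS0 S_def by simp
  have SV: "S \<subseteq> V" unfolding S_def weak_supports_def by auto
  have finV: "finite V" using g by (simp add: graph_def)
  have finS: "finite S" using SV finV finite_subset by blast
  have pack: "\<And>a b. a \<in> S \<Longrightarrow> b \<in> S \<Longrightarrow> a \<noteq> b \<Longrightarrow> 3 \<le> dist V E a b"
    using assms(3) unfolding max_two_packing_def two_packing_def S_def by blast
  have maxp: "\<And>Q. two_packing V E Q \<Longrightarrow> card Q \<le> card S"
    using assms(3) unfolding max_two_packing_def S_def by blast
  define P where "P = S - {x}"
  have xV: "x \<in> V" using xS SV by auto
  have PS: "P \<subseteq> S" and finP: "finite P" using P_def finS by auto
  have cardS: "card S = Suc (card P)" using P_def finS xS by (metis card_Suc_Diff1)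
  show "dist_set V E x (weak_supports V E - {x}) = 3"
  proof (rule ccontr)
    assume ne3: "dist_set V E x (weak_supports V E - {x}) \<noteq> 3"
    have far: "4 \<le> dist V E x y" if yP: "y \<in> P" for y
    proof -
      have ge3: "3 \<le> dist V E x y" using pack xS PS yP P_def by auto
      have "dist V E x y \<noteq> 3"
      proof
        assume eq: "dist V E x y = 3"
        have fin: "finite (dist V E x ` P)" using finP by simp
        have "Min (dist V E x ` P) \<le> 3" using Min_le[OF fin] eq yP by (metis imageI)
        moreover have "Min (dist V E x ` P) \<in> dist V E x ` P" using fin yP by (intro Min_in) auto
        then have "3 \<le> Min (dist V E x ` P)" using pack xS PS P_def by auto
        ultimately have "dist_set V E x P = 3" unfolding dist_set_def by simp
        then show False using ne3 P_def S_def by simp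
      qed
      then show ?thesis using ge3 by simp
    qed
    have PV: "y \<in> V" if "y \<in> P" for y using that PS SV by auto
    have "card {u \<in> V. E x u \<and> leaf V E u} = 1" using xS S_def
      by (simp add: weak_supports_def weak_support_def)
    then obtain l where L: "{u \<in> V. E x u \<and> leaf V E u} = {l}" by (meson card_1_singletonE)
    have lV: "l \<in> V" and xl: "E x l" and leafl: "leaf V E l" using L by auto
    have dxl: "dist V E x l = 1" using dist_E xl by simp
    obtain w where wV: "w \<in> V" and xw: "dist V E x w = 2"
      using exists_dist2[OF tE assms(2)] xS S_def by (auto simp: weak_supports_def)
    define lf where "lf y = (SOME u. u \<in> V \<and> E y u \<and> leaf V E u)" for y
    have lf: "lf y \<in> V \<and> E y (lf y) \<and> leaf V E (lf y)" if "y \<in> S" for y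
    proof -
      have "card {u \<in> V. E y u \<and> leaf V E u} = 1" using that S_def
        by (simp add: weak_supports_def weak_support_def)
      then have "{u \<in> V. E y u \<and> leaf V E u} \<noteq> {}" by force
      then have "\<exists>u. u \<in> V \<and> E y u \<and> leaf V E u" by blast
      then show ?thesis unfolding lf_def by (rule someI_ex)
    qed
    define Y where "Y = {y \<in> P. dist V E w y \<le> 2}"
    have YP: "Y \<subseteq> P" using Y_def by auto
    have finY: "finite Y" using YP finP finite_subset by blast
    have Fl: "Suc (dist V E x v) \<le> dist V E l v" if "v \<in> V" "v \<noteq> l" for v
      using dist_leaf[OF leafl Esym[OF xl] that] .
    have Flf: "Suc (dist V E y v) \<le> dist V E (lf y) v" if "y \<in> S" "v \<in> V" "v \<noteq> lf y" for y v
      using dist_leaf[of "lf y" y v] lf[OF that(1)] Esym that by blast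
    have dlf1: "dist V E y (lf y) = 1" if "y \<in> S" for y using lf[OF that] dist_E by blast
    have Pl: "y \<noteq> l" if "y \<in> P" for y using far[OF that] dxl by auto
    have Yw: "dist V E w y = 2" if "y \<in> Y" for y
    proof -
      have "y \<in> P" using that YP by auto
      then have "dist V E x y \<le> dist V E x w + dist V E w y" using dist_tri xV wV PV by blast
      then show ?thesis using far[OF \<open>y \<in> P\<close>] xw that Y_def by simp
    qed
    have i: "3 \<le> dist V E a b" if "a \<in> P - Y" "b \<in> P - Y" "a \<noteq> b" for a b
      using pack that PS by auto
    have ii_ne: "a \<noteq> lf y" if "a \<in> P - Y" "y \<in> Y" for a y
    proof
      assume "a = lf y"
      then have "dist V E y a = 1" using dlf1 that YP PS by auto
      moreover have "y \<noteq> a" using that by auto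
      ultimately show False using pack[of y a] that YP PS by auto
    qed
    have ii: "3 \<le> dist V E (lf y) a" if "a \<in> P - Y" "y \<in> Y" for a y
    proof -
      have "y \<noteq> a" using that by auto
      then have "3 \<le> dist V E y a" using pack[of y a] that YP PS by auto
      then show ?thesis using Flf[of y a] ii_ne[OF that] that YP PS PV by fastforce
    qed
    have iii: "3 \<le> dist V E l a" if "a \<in> P - Y" for a
      using Fl[of a] far[of a] that PV Pl by fastforce
    have iv: "3 \<le> dist V E w a" if "a \<in> P - Y" for a using that Y_def by auto
    have lf_ne: "lf y \<noteq> y'" "y \<noteq> y'" if "y \<in> Y" "y' \<in> Y" "lf y \<noteq> lf y'" for y y'
    proof -
      show "y \<noteq> y'" using that by auto
      show "lf y \<noteq> y'"
      proof
        assume "lf y = y'"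
        then have "dist V E y y' = 1" using dlf1 that YP PS by auto
        then show False using pack[of y y'] \<open>y \<noteq> y'\<close> that YP PS by auto
      qed
    qed
    have v: "3 \<le> dist V E (lf y) (lf y')" if "y \<in> Y" "y' \<in> Y" "lf y \<noteq> lf y'" for y y'
    proof -
      have yy: "y \<noteq> y'" "lf y' \<noteq> y" using lf_ne[of y' y] that by auto
      have "3 \<le> dist V E y' y" using pack[of y' y] yy that YP PS by auto
      then have "4 \<le> dist V E (lf y') y" using Flf[of y' y] yy that YP PS PV by fastforce
      moreover have "dist V E (lf y') y = dist V E y (lf y')"
        using dist_sym lf that YP PS PV by (meson subsetD)
      ultimately have "4 \<le> dist V E y (lf y')" by simp
      then show ?thesis using Flf[of y "lf y'"] that lf YP PS by fastforce
    qed
    have lf_inj: "inj_on lf Y"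
    proof (rule inj_onI)
      fix y y' assume h: "y \<in> Y" "y' \<in> Y" "lf y = lf y'"
      show "y = y'"
      proof (rule ccontr)
        assume "y \<noteq> y'"
        have yV: "y \<in> V" "y' \<in> V" "lf y \<in> V" using h YP PV lf PS by auto
        have "dist V E y y' \<le> dist V E y (lf y) + dist V E (lf y) y'" using dist_tri yV by blast
        also have "dist V E (lf y) y' = dist V E y' (lf y')" using h yV dist_sym by simp
        moreover have "y \<in> S" "y' \<in> S" using h YP PS by auto
        ultimately have "dist V E y y' \<le> 2" using dlf1 h by (metis one_add_one)
        then show False using pack[of y y'] \<open>y \<noteq> y'\<close> h YP PS by auto
      qed
    qed
    have l5: "5 \<le> dist V E y l" if "y \<in> Y" for y
    proof -
      have yP: "y \<in> P" using that YP by auto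
      have "5 \<le> dist V E l y" using Fl[of y] far[OF yP] PV[OF yP] Pl[OF yP] by simp
      then show ?thesis using dist_sym lV PV[OF yP] by simp
    qed
    have vi_ne: "lf y \<noteq> l" if "y \<in> Y" for y
      using l5[OF that] dlf1[of y] that YP PS by auto
    have vi: "3 \<le> dist V E (lf y) l" if "y \<in> Y" for y
      using Flf[of y l] vi_ne[OF that] lV that YP PS l5[OF that] by fastforce
    have vii_ne: "lf y \<noteq> w" if "y \<in> Y" for y
      using Yw[OF that] dlf1[of y] dist_sym[of y w] that YP PS PV wV by fastforce
    have vii: "3 \<le> dist V E (lf y) w" if "y \<in> Y" for y
    proof -
      have "dist V E y w = 2" using Yw[OF that] dist_sym[of y w] that YP PV wV by fastforce
      then show ?thesis using Flf[of y w] vii_ne[OF that] that YP PS wV by fastforce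
    qed
    have wl: "w \<noteq> l" using xw dxl by auto
    have viii: "3 \<le> dist V E l w" using Fl[OF wV wl] xw by simp
    define Q where "Q = insert l (insert w ((P - Y) \<union> lf ` Y))"
    have QV: "Q \<subseteq> V" using Q_def lV wV PV lf YP PS by auto
    have symm: "\<And>a b. a \<in> V \<Longrightarrow> b \<in> V \<Longrightarrow> 3 \<le> dist V E a b \<Longrightarrow> 3 \<le> dist V E b a"
      using dist_sym by simp
    have lfV: "lf y \<in> V" if "y \<in> Y" for y using lf that YP PS by blast
    have PYV: "a \<in> V" if "a \<in> P - Y" for a using PV that by blast
    have ii': "3 \<le> dist V E a (lf y)" if "a \<in> P - Y" "y \<in> Y" for a y
      using symm ii lfV PYV that by blast
    have iii': "3 \<le> dist V E a l" if "a \<in> P - Y" for a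
      using symm iii lV PYV that by blast
    have iv': "3 \<le> dist V E a w" if "a \<in> P - Y" for a
      using symm iv wV PYV that by blast
    have vi': "3 \<le> dist V E l (lf y)" if "y \<in> Y" for y
      using symm vi lfV lV that by blast
    have vii': "3 \<le> dist V E w (lf y)" if "y \<in> Y" for y
      using symm vii lfV wV that by blast
    have viii': "3 \<le> dist V E w l" using symm viii lV wV by blast
    have "two_packing V E Q" unfolding two_packing_def
    proof (intro conjI QV ballI impI)
      fix a b assume a: "a \<in> Q" and b: "b \<in> Q" and ab: "a \<noteq> b"
      show "3 \<le> dist V E a b"
        using a b ab unfolding Q_def
        by (elim insertE UnE imageE; auto intro: i ii iii iv v vi vii viii ii' iii' iv' vi' vii' viii')
    qed
    then have le: "card Q \<le> card S" using maxp by blast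
    have d1: "(P - Y) \<inter> lf ` Y = {}" using ii_ne by blast
    have wn: "w \<notin> (P - Y) \<union> lf ` Y" using vii_ne iv wV by (fastforce simp: dist_self)
    have ln: "l \<notin> insert w ((P - Y) \<union> lf ` Y)" using vi_ne Pl wl by auto
    have "card Q = Suc (Suc (card (P - Y) + card (lf ` Y)))"
      unfolding Q_def using ln wn d1 finP finY by (simp add: card_Un_disjoint)
    also have "card (lf ` Y) = card Y" using lf_inj by (simp add: card_image)
    also have "card (P - Y) + card Y = card P" using finP YP
      by (metis card_Diff_subset finite_subset le_add_diff_inverse2 card_mono)
    finally show False using le cardS by simp
  qed
qed

end
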